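(* Let $M'=\langle A,\Sigma\rangle$ be a countable structure and let $\mathcal{F}$ be the set of all (everywhere defined) functions $f\colon\mathbb{N}\to A$. Let $\varphi\colon\mathcal{F}\to\mathcal{F}$ be a partial mapping with countable domain which almost preserves every relation definable in $\langle A,\Sigma\rangle$. Then for every $a\in\mathcal{F}$ with $a\notin \mathrm{Dom}(\varphi)$ there exists $b\in\mathcal{F}$ such that the mapping $\varphi\cup\{\langle a,b\rangle\}$ (extending $\varphi$ by $a\mapsto b$) almost preserves every relation definable in $\langle A,\Sigma\rangle$.
   Context: The signature $\Sigma$ contains the equality symbol $=$. A relation on $A$ is definable in $\langle A,\Sigma\rangle$ if it is defined in $M'$ by a first-order formula in the signature $\Sigma$ (without parameters). For an $n$-ary relation $P$ on $A$ and a partial mapping $\psi\colon\mathcal{F}\to\mathcal{F}$, we say $\psi$ almost preserves $P$ if for all $f_1,\dots,f_n\in\mathrm{Dom}(\psi)$ the set $\{i\in\mathbb{N} : P(f_1(i),\dots,f_n(i))\not\leftrightarrow P(\psi(f_1)(i),\dots,\psi(f_n)(i))\}$ is finite. *)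

theory Defs
  imports Main "HOL-Library.Countable" "HOL-Library.Countable_Set"
begin

datatype 'f trm = Var nat | Fn 'f "'f trm list"

datatype ('f, 'r) fm =
    Eq "'f trm" "'f trm"
  | Rel 'r "'f trm list"
  | Neg "('f, 'r) fm"
  | Conj "('f, 'r) fm" "('f, 'r) fm"
  | Ex nat "('f, 'r) fm"

text \<open>A structure: universe is the whole type 'a; the signature gives arities.\<close>
record ('a, 'f, 'r) struct =
  fun_ar :: "'f \<Rightarrow> nat"
  rel_ar :: "'r \<Rightarrow> nat"
  fun_int :: "'f \<Rightarrow> 'a list \<Rightarrow> 'a"
  rel_int :: "'r \<Rightarrow> 'a list \<Rightarrow> bool"

fun wf_trm :: "('a, 'f, 'r) struct \<Rightarrow> 'f trm \<Rightarrow> bool" where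
  "wf_trm M (Var x) = True"
| "wf_trm M (Fn f ts) = (length ts = fun_ar M f \<and> (\<forall>t\<in>set ts. wf_trm M t))"

fun wf_fm :: "('a, 'f, 'r) struct \<Rightarrow> ('f, 'r) fm \<Rightarrow> bool" where
  "wf_fm M (Eq s t) = (wf_trm M s \<and> wf_trm M t)"
| "wf_fm M (Rel r ts) = (length ts = rel_ar M r \<and> (\<forall>t\<in>set ts. wf_trm M t))"
| "wf_fm M (Neg p) = wf_fm M p"
| "wf_fm M (Conj p q) = (wf_fm M p \<and> wf_fm M q)"
| "wf_fm M (Ex x p) = wf_fm M p"

fun fv_trm :: "'f trm \<Rightarrow> nat set" where
  "fv_trm (Var x) = {x}"
| "fv_trm (Fn f ts) = (\<Union>t\<in>set ts. fv_trm t)"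

fun fv_fm :: "('f, 'r) fm \<Rightarrow> nat set" where
  "fv_fm (Eq s t) = fv_trm s \<union> fv_trm t"
| "fv_fm (Rel r ts) = (\<Union>t\<in>set ts. fv_trm t)"
| "fv_fm (Neg p) = fv_fm p"
| "fv_fm (Conj p q) = fv_fm p \<union> fv_fm q"
| "fv_fm (Ex x p) = fv_fm p - {x}"

fun eval_trm :: "('a, 'f, 'r) struct \<Rightarrow> (nat \<Rightarrow> 'a) \<Rightarrow> 'f trm \<Rightarrow> 'a" where
  "eval_trm M e (Var x) = e x"
| "eval_trm M e (Fn f ts) = fun_int M f (map (eval_trm M e) ts)"

fun sat :: "('a, 'f, 'r) struct \<Rightarrow> (nat \<Rightarrow> 'a) \<Rightarrow> ('f, 'r) fm \<Rightarrow> bool" where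
  "sat M e (Eq s t) = (eval_trm M e s = eval_trm M e t)"
| "sat M e (Rel r ts) = rel_int M r (map (eval_trm M e) ts)"
| "sat M e (Neg p) = (\<not> sat M e p)"
| "sat M e (Conj p q) = (sat M e p \<and> sat M e q)"
| "sat M e (Ex x p) = (\<exists>v. sat M (e(x := v)) p)"

text \<open>An n-ary relation on 'a is represented by its characteristic predicate on lists
(only lists of length n matter).\<close>
definition definable :: "('a, 'f, 'r) struct \<Rightarrow> nat \<Rightarrow> ('a list \<Rightarrow> bool) \<Rightarrow> bool" where
  "definable M n P \<longleftrightarrow> (\<exists>\<phi>. wf_fm M \<phi> \<and> fv_fm \<phi> \<subseteq> {..<n} \<and>
     (\<forall>xs. length xs = n \<longrightarrow> (P xs \<longleftrightarrow> sat M (\<lambda>i. if i < n then xs ! i else undefined) \<phi>)))"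

definition almost_preserves ::
  "nat \<Rightarrow> ('a list \<Rightarrow> bool) \<Rightarrow> ((nat \<Rightarrow> 'a) \<rightharpoonup> (nat \<Rightarrow> 'a)) \<Rightarrow> bool" where
  "almost_preserves n P \<psi> \<longleftrightarrow> (\<forall>fs. length fs = n \<and> set fs \<subseteq> dom \<psi> \<longrightarrow>
     finite {i::nat. P (map (\<lambda>f. f i) fs) \<noteq> P (map (\<lambda>f. the (\<psi> f) i) fs)})"

end

theory Submission
  imports Defs
begin
instance trm :: (countable) countable by countable_datatype
instance fm :: (countable, countable) countable by countable_datatype

fun ren_trm :: "(nat \<Rightarrow> nat) \<Rightarrow> 'f trm \<Rightarrow> 'f trm" where
  "ren_trm \<sigma> (Var x) = Var (\<sigma> x)"
| "ren_trm \<sigma> (Fn f ts) = Fn f (map (ren_trm \<sigma>) ts)"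

lemma ren_trm_eval: "eval_trm M e (ren_trm \<sigma> t) = eval_trm M (\<lambda>w. e (\<sigma> w)) t"
  by (induction t) (auto cong: map_cong)
lemma ren_trm_fv: "fv_trm (ren_trm \<sigma> t) = \<sigma> ` fv_trm t"
  by (induction t) auto
lemma ren_trm_wf: "wf_trm M (ren_trm \<sigma> t) = wf_trm M t"
  by (induction t) auto
lemmas ren_trm_props = ren_trm_eval ren_trm_fv ren_trm_wf

lemma finite_fv_trm: "finite (fv_trm t)"
  by (induction t) auto

lemma finite_fv: "finite (fv_fm p)"
  by (induction p) (auto simp: finite_fv_trm)

lemma eval_coinc: "(\<forall>x\<in>fv_trm t. e x = e' x) \<Longrightarrow> eval_trm M e t = eval_trm M e' t"
  by (induction t) (auto cong: map_cong)

lemma sat_coinc: "(\<forall>x\<in>fv_fm p. e x = e' x) \<Longrightarrow> sat M e p = sat M e' p"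
proof (induction p arbitrary: e e')
  case (Eq s t) then show ?case using eval_coinc[of s e e' M] eval_coinc[of t e e' M] by auto
next
  case (Rel r ts)
  have "map (eval_trm M e) ts = map (eval_trm M e') ts"
    using Rel by (auto intro!: eval_coinc)
  then show ?case by (simp only: sat.simps)
next
  case (Ex x p)
  have "\<And>v. sat M (e(x:=v)) p = sat M (e'(x:=v)) p"
    using Ex.prems by (intro Ex.IH) auto
  then show ?case by simp
next
  case (Conj p1 p2)
  have "sat M e p1 = sat M e' p1" "sat M e p2 = sat M e' p2"
    using Conj.prems by (intro Conj.IH; auto)+
  then show ?case by simp
qed auto

lemma subst_fm:
  "wf_fm M p \<Longrightarrow> \<exists>q. wf_fm M q \<and> fv_fm q \<subseteq> \<sigma> ` fv_fm p \<and> (\<forall>e. sat M e q = sat M (\<lambda>w. e (\<sigma> w)) p)"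
proof (induction p arbitrary: \<sigma>)
  case (Eq s t)
  then show ?case by (intro exI[of _ "Eq (ren_trm \<sigma> s) (ren_trm \<sigma> t)"]) (auto simp: ren_trm_props comp_def)
next
  case (Rel r ts)
  then show ?case by (intro exI[of _ "Rel r (map (ren_trm \<sigma>) ts)"]) (auto simp: ren_trm_props comp_def)
next
  case (Neg p)
  then obtain q where "wf_fm M q \<and> fv_fm q \<subseteq> \<sigma> ` fv_fm p \<and> (\<forall>e. sat M e q = sat M (\<lambda>w. e (\<sigma> w)) p)"
    by fastforce
  then show ?case by (intro exI[of _ "Neg q"]) auto
next
  case (Conj p1 p2)
  then obtain q1 q2 where "wf_fm M q1 \<and> fv_fm q1 \<subseteq> \<sigma> ` fv_fm p1 \<and> (\<forall>e. sat M e q1 = sat M (\<lambda>w. e (\<sigma> w)) p1)"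
     "wf_fm M q2 \<and> fv_fm q2 \<subseteq> \<sigma> ` fv_fm p2 \<and> (\<forall>e. sat M e q2 = sat M (\<lambda>w. e (\<sigma> w)) p2)"
    by (metis wf_fm.simps(4))
  then show ?case by (intro exI[of _ "Conj q1 q2"]) auto
next
  case (Ex x p)
  have "finite (\<sigma> ` fv_fm p)" using finite_fv by blast
  then obtain z where z: "z \<notin> \<sigma> ` fv_fm p" using ex_new_if_finite infinite_UNIV_nat by blast
  obtain q where q: "wf_fm M q" "fv_fm q \<subseteq> \<sigma>(x:=z) ` fv_fm p"
     "\<forall>e. sat M e q = sat M (\<lambda>w. e ((\<sigma>(x:=z)) w)) p"
    using Ex.IH[of "\<sigma>(x:=z)"] Ex.prems by auto
  have "sat M e (Ex z q) = sat M (\<lambda>w. e (\<sigma> w)) (Ex x p)" for e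
  proof -
    have "sat M (\<lambda>w. (e(z:=v)) ((\<sigma>(x:=z)) w)) p = sat M ((\<lambda>w. e (\<sigma> w))(x:=v)) p" for v
      using z by (intro sat_coinc) auto
    then show ?thesis using q(3) by simp
  qed
  moreover have "fv_fm (Ex z q) \<subseteq> \<sigma> ` fv_fm (Ex x p)"
    using q(2) by auto
  ultimately show ?case using q(1) by (intro exI[of _ "Ex z q"]) simp
qed

definition Lsat :: "('a,'f,'r) struct \<Rightarrow> ('f,'r) fm \<Rightarrow> nat option list \<Rightarrow> (nat option \<Rightarrow> 'a) \<Rightarrow> bool" where
  "Lsat M \<theta> \<iota> h = sat M (\<lambda>l. if l < length \<iota> then h (\<iota>!l) else undefined) \<theta>"
definition hA :: "(nat \<Rightarrow> 'a) \<Rightarrow> (nat \<Rightarrow> nat \<Rightarrow> 'a) \<Rightarrow> nat \<Rightarrow> nat option \<Rightarrow> 'a" where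
  "hA a g i = (\<lambda>x. case x of None \<Rightarrow> a i | Some t \<Rightarrow> g t i)"
definition hB :: "((nat \<Rightarrow> 'a) \<rightharpoonup> (nat \<Rightarrow> 'a)) \<Rightarrow> (nat \<Rightarrow> nat \<Rightarrow> 'a) \<Rightarrow> 'a \<Rightarrow> nat \<Rightarrow> nat option \<Rightarrow> 'a" where
  "hB \<phi> g y i = (\<lambda>x. case x of None \<Rightarrow> y | Some t \<Rightarrow> the (\<phi> (g t)) i)"
definition code :: "nat option \<Rightarrow> nat" where "code x = (case x of None \<Rightarrow> 0 | Some t \<Rightarrow> Suc t)"

fun conjs :: "('f,'r) fm list \<Rightarrow> ('f,'r) fm" where
  "conjs [] = Eq (Var 0) (Var 0)"
| "conjs (p#ps) = Conj p (conjs ps)"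

lemma conjs_sat: "sat M e (conjs ps) = (\<forall>p\<in>set ps. sat M e p)"
  by (induction ps) auto
lemma conjs_wf: "wf_fm M (conjs ps) = (\<forall>p\<in>set ps. wf_fm M p)"
  by (induction ps) auto
lemma conjs_fv: "fv_fm (conjs ps) \<subseteq> {0} \<union> (\<Union>p\<in>set ps. fv_fm p)"
  by (induction ps) auto

lemma Lsat_link:
  assumes "fv_fm \<theta> \<subseteq> {..<length \<iota>}" "\<forall>l<length \<iota>. E (code (\<iota>!l)) = h (\<iota>!l)"
  shows "sat M (\<lambda>w. E (code (\<iota>!w))) \<theta> = Lsat M \<theta> \<iota> h"
  unfolding Lsat_def using assms by (intro sat_coinc) auto

lemma key:
  fixes \<phi> :: "(nat \<Rightarrow> 'a) \<rightharpoonup> (nat \<Rightarrow> 'a)" and M :: "('a,'f,'r) struct"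
  assumes pres: "\<forall>n P. definable M n P \<longrightarrow> almost_preserves n P \<phi>"
    and gdom: "\<forall>t. g t \<in> dom \<phi>"
    and cs: "\<forall>c\<in>set cs. wf_fm M (fst c) \<and> fv_fm (fst c) \<subseteq> {..<length (snd c)}"
  shows "finite {i. \<not>(\<exists>y. \<forall>c\<in>set cs. Lsat M (fst c) (snd c) (hA a g i) = Lsat M (fst c) (snd c) (hB \<phi> g y i))}"
proof -
  define T where "T = (\<Union>c\<in>set cs. Some -` set (snd c))"
  have finT: "finite T" unfolding T_def by (auto intro: finite_vimageI)
  define N where "N = Max (insert 0 T) + 2"
  have TN: "Suc t < N" if "t \<in> T" for t
  proof -
    have "t \<le> Max (insert 0 T)" using finT that by (intro Max_ge) auto
    thus ?thesis unfolding N_def by simp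
  qed
  have codeN: "code (snd c ! l) < N" if "c \<in> set cs" "l < length (snd c)" for c l
  proof (cases "snd c ! l")
    case None then show ?thesis by (simp add: code_def N_def)
  next
    case (Some t)
    then have "t \<in> T" unfolding T_def using that nth_mem[OF that(2)] by force
    then show ?thesis using Some TN by (simp add: code_def)
  qed
  define th where "th c = (SOME q. wf_fm M q \<and> fv_fm q \<subseteq> (\<lambda>w. code (snd c ! w)) ` fv_fm (fst c)
      \<and> (\<forall>e. sat M e q = sat M (\<lambda>w. e (code (snd c ! w))) (fst c)))" for c
  have th: "wf_fm M (th c) \<and> fv_fm (th c) \<subseteq> (\<lambda>w. code (snd c ! w)) ` fv_fm (fst c)
      \<and> (\<forall>e. sat M e (th c) = sat M (\<lambda>w. e (code (snd c ! w))) (fst c))" if "c \<in> set cs" for c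
    unfolding th_def by (rule someI_ex, rule subst_fm) (use cs that in auto)
  have thN: "fv_fm (th c) \<subseteq> {..<N}" if cc: "c \<in> set cs" for c
  proof
    fix x assume "x \<in> fv_fm (th c)"
    then obtain w where "w \<in> fv_fm (fst c)" "x = code (snd c ! w)" using th[OF cc] by blast
    moreover have "w < length (snd c)" using calculation cs cc by auto
    ultimately show "x \<in> {..<N}" using codeN cc by auto
  qed
  define \<psi> where "\<psi> S = Ex 0 (conjs (map (\<lambda>c. if c \<in> S then th c else Neg (th c)) cs))" for S
  define env where "env zs = (\<lambda>l. if l < N then zs ! l else undefined)" for zs :: "'a list"
  define PS where "PS S zs = sat M (env zs) (\<psi> S)" for S zs
  have defi: "definable M N (PS S)" for S
    unfolding definable_def
  proof (intro exI[of _ "\<psi> S"] conjI)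
    show "wf_fm M (\<psi> S)" unfolding \<psi>_def using th by (auto simp: conjs_wf)
    show "fv_fm (\<psi> S) \<subseteq> {..<N}" unfolding \<psi>_def using thN conjs_fv by fastforce
  qed (auto simp: PS_def env_def)
  define fs where "fs = map (\<lambda>l. g (l - 1)) [0..<N]"
  have fs: "length fs = N \<and> set fs \<subseteq> dom \<phi>" unfolding fs_def using gdom by auto
  define bad where "bad S = {i. PS S (map (\<lambda>f. f i) fs) \<noteq> PS S (map (\<lambda>f. the (\<phi> f) i) fs)}" for S
  have "finite (bad S)" for S using pres defi fs unfolding almost_preserves_def bad_def by blast
  hence finB: "finite (\<Union>S\<in>Pow (set cs). bad S)" by auto
  show ?thesis
  proof (rule finite_subset[OF _ finB], rule subsetI, rule ccontr)
    fix i assume i: "i \<in> {i. \<not>(\<exists>y. \<forall>c\<in>set cs. Lsat M (fst c) (snd c) (hA a g i) = Lsat M (fst c) (snd c) (hB \<phi> g y i))}"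
      and ni: "i \<notin> (\<Union>S\<in>Pow (set cs). bad S)"
    define S where "S = {c\<in>set cs. Lsat M (fst c) (snd c) (hA a g i)}"
    have "S \<in> Pow (set cs)" unfolding S_def by auto
    hence nb: "i \<notin> bad S" using ni by blast
    define EL where "EL = env (map (\<lambda>f. f i) fs)"
    define ER where "ER = env (map (\<lambda>f. the (\<phi> f) i) fs)"
    have EL: "EL l = g (l-1) i" if "l < N" for l using that unfolding EL_def env_def fs_def by simp
    have ER: "ER l = the (\<phi> (g (l-1))) i" if "l < N" for l using that unfolding ER_def env_def fs_def by simp
    have linkL: "sat M (EL(0:=a i)) (th c) = Lsat M (fst c) (snd c) (hA a g i)" if c: "c \<in> set cs" for c
    proof -
      have "sat M (EL(0:=a i)) (th c) = sat M (\<lambda>w. (EL(0:=a i)) (code (snd c ! w))) (fst c)"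
        using th[OF c] by blast
      also have "\<dots> = Lsat M (fst c) (snd c) (hA a g i)"
      proof (rule Lsat_link)
        show "fv_fm (fst c) \<subseteq> {..<length (snd c)}" using cs c by auto
        show "\<forall>l<length (snd c). (EL(0 := a i)) (code (snd c ! l)) = hA a g i (snd c ! l)"
        proof (intro allI impI)
          fix l assume l: "l < length (snd c)"
          show "(EL(0 := a i)) (code (snd c ! l)) = hA a g i (snd c ! l)"
            using codeN[OF c l] EL by (cases "snd c ! l") (auto simp: code_def hA_def)
        qed
      qed
      finally show ?thesis .
    qed
    have linkR: "sat M (ER(0:=v)) (th c) = Lsat M (fst c) (snd c) (hB \<phi> g v i)" if c: "c \<in> set cs" for c v
    proof -
      have "sat M (ER(0:=v)) (th c) = sat M (\<lambda>w. (ER(0:=v)) (code (snd c ! w))) (fst c)"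
        using th[OF c] by blast
      also have "\<dots> = Lsat M (fst c) (snd c) (hB \<phi> g v i)"
      proof (rule Lsat_link)
        show "fv_fm (fst c) \<subseteq> {..<length (snd c)}" using cs c by auto
        show "\<forall>l<length (snd c). (ER(0 := v)) (code (snd c ! l)) = hB \<phi> g v i (snd c ! l)"
        proof (intro allI impI)
          fix l assume l: "l < length (snd c)"
          show "(ER(0 := v)) (code (snd c ! l)) = hB \<phi> g v i (snd c ! l)"
            using codeN[OF c l] ER by (cases "snd c ! l") (auto simp: code_def hB_def)
        qed
      qed
      finally show ?thesis .
    qed
    have "PS S (map (\<lambda>f. f i) fs)"
      unfolding PS_def \<psi>_def EL_def[symmetric] using linkL
      by (auto simp: conjs_sat S_def intro!: exI[of _ "a i"])
    hence "PS S (map (\<lambda>f. the (\<phi> f) i) fs)" using nb unfolding bad_def by auto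
    then obtain v where v0: "\<forall>p\<in>set (map (\<lambda>c. if c \<in> S then th c else Neg (th c)) cs). sat M (ER(0:=v)) p"
      unfolding PS_def \<psi>_def ER_def[symmetric] by (auto simp only: conjs_sat sat.simps)
    have v: "\<forall>c\<in>set cs. (sat M (ER(0:=v)) (th c) \<longleftrightarrow> c \<in> S)"
    proof
      fix c assume "c \<in> set cs"
      then have "sat M (ER(0:=v)) (if c \<in> S then th c else Neg (th c))" using v0 by auto
      then show "(sat M (ER(0:=v)) (th c) \<longleftrightarrow> c \<in> S)" by (cases "c \<in> S") auto
    qed
    have "\<forall>c\<in>set cs. Lsat M (fst c) (snd c) (hA a g i) = Lsat M (fst c) (snd c) (hB \<phi> g v i)"
      using v linkR unfolding S_def by auto
    thus False using i by auto
  qed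
qed

theorem lemma1:
  fixes M :: "('a::countable, 'f::countable, 'r::countable) struct"
    and \<phi> :: "(nat \<Rightarrow> 'a) \<rightharpoonup> (nat \<Rightarrow> 'a)"
    and a :: "nat \<Rightarrow> 'a"
  assumes "countable (dom \<phi>)"
    and "\<forall>n P. definable M n P \<longrightarrow> almost_preserves n P \<phi>"
    and "a \<notin> dom \<phi>"
  shows "\<exists>b. \<forall>n P. definable M n P \<longrightarrow> almost_preserves n P (\<phi>(a \<mapsto> b))"
proof -
  define g where "g = from_nat_into (dom \<phi>)"
  define good where "good c \<longleftrightarrow> wf_fm M (fst c) \<and> fv_fm (fst c) \<subseteq> {..<length (snd c)} \<and> (\<forall>t. Some t \<in> set (snd c) \<longrightarrow> g t \<in> dom \<phi>)"
    for c :: "('f,'r) fm \<times> nat option list"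
  define Conds where "Conds k = filter good (map from_nat [0..<k])" for k
  define OK where "OK k i y \<longleftrightarrow> (\<forall>c\<in>set (Conds k). Lsat M (fst c) (snd c) (hA a g i) = Lsat M (fst c) (snd c) (hB \<phi> g y i))" for k i y
  have setC: "set (Conds k) = {c \<in> from_nat ` {..<k}. good c}" for k unfolding Conds_def by auto
  have mono: "OK k i y" if "OK k' i y" "k \<le> k'" for k k' i y using that unfolding OK_def setC by auto
  have fin: "finite {i. \<not>(\<exists>y. OK k i y)}" for k
  proof (cases "dom \<phi> = {}")
    case True
    have "OK k i (a i)" for i
      unfolding OK_def Lsat_def
    proof
      fix c assume c: "c \<in> set (Conds k)"
      have "(\<lambda>l. if l < length (snd c) then hA a g i (snd c ! l) else undefined)
          = (\<lambda>l. if l < length (snd c) then hB \<phi> g (a i) i (snd c ! l) else undefined)"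
      proof
        fix l show "(if l < length (snd c) then hA a g i (snd c ! l) else undefined)
          = (if l < length (snd c) then hB \<phi> g (a i) i (snd c ! l) else undefined)"
        proof (cases "l < length (snd c)")
          case l: True
          have "snd c ! l = None"
          proof (rule ccontr)
            assume "snd c ! l \<noteq> None"
            then obtain t where "Some t \<in> set (snd c)" using nth_mem[OF l] by (cases "snd c ! l") auto
            then show False using c True unfolding setC good_def by auto
          qed
          then show ?thesis by (simp add: hA_def hB_def)
        qed simp
      qed
      then show "sat M (\<lambda>l. if l < length (snd c) then hA a g i (snd c ! l) else undefined) (fst c) =
          sat M (\<lambda>l. if l < length (snd c) then hB \<phi> g (a i) i (snd c ! l) else undefined) (fst c)" by simp
    qed
    then have "{i. \<not>(\<exists>y. OK k i y)} = {}" by blast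
    then show ?thesis by simp
  next
    case False
    have gd: "\<forall>t. g t \<in> dom \<phi>" using from_nat_into[OF False] g_def by auto
    have "\<forall>c\<in>set (Conds k). wf_fm M (fst c) \<and> fv_fm (fst c) \<subseteq> {..<length (snd c)}"
      unfolding setC good_def by auto
    from key[OF assms(2) gd this, of a] show ?thesis unfolding OK_def .
  qed
  define K where "K i = Max {k. k \<le> i \<and> (\<exists>y. OK k i y)}" for i
  define b where "b i = (SOME y. OK (K i) i y)" for i
  have OKb: "finite {i. \<not> OK k i (b i)}" for k
  proof -
    have "{i. \<not> OK k i (b i)} \<subseteq> {..<k} \<union> {i. \<not>(\<exists>y. OK k i y)}"
    proof (rule subsetI, rule ccontr)
      fix i assume i: "i \<in> {i. \<not> OK k i (b i)}" "i \<notin> {..<k} \<union> {i. \<not>(\<exists>y. OK k i y)}"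
      hence ki: "k \<le> i" "\<exists>y. OK k i y" by auto
      have finS: "finite {k. k \<le> i \<and> (\<exists>y. OK k i y)}" by (rule finite_subset[of _ "{..i}"]) auto
      have kK: "k \<le> K i" unfolding K_def using ki finS by (intro Max_ge) auto
      have "K i \<in> {k. k \<le> i \<and> (\<exists>y. OK k i y)}" unfolding K_def using ki finS by (intro Max_in) auto
      hence "OK (K i) i (b i)" unfolding b_def by (auto intro: someI_ex)
      with kK have "OK k i (b i)" using mono by blast
      with i show False by auto
    qed
    thus ?thesis using fin[of k] by (auto intro: finite_subset)
  qed
  show ?thesis
  proof (intro exI[of _ b] allI impI)
    fix n P assume "definable M n P"
    then obtain \<theta> where \<theta>: "wf_fm M \<theta>" "fv_fm \<theta> \<subseteq> {..<n}"
      "\<forall>xs. length xs = n \<longrightarrow> (P xs \<longleftrightarrow> sat M (\<lambda>i. if i < n then xs ! i else undefined) \<theta>)"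
      unfolding definable_def by blast
    show "almost_preserves n P (\<phi>(a \<mapsto> b))"
      unfolding almost_preserves_def
    proof (intro allI impI)
      fix fs :: "(nat \<Rightarrow> 'a) list" assume fs: "length fs = n \<and> set fs \<subseteq> dom (\<phi>(a \<mapsto> b))"
      define \<iota> where "\<iota> = map (\<lambda>f. if f = a then None else Some (SOME t. g t = f)) fs"
      have gf: "g (SOME t. g t = f) = f" if "f \<in> dom \<phi>" for f
      proof -
        have "\<exists>t. g t = f" using from_nat_into_surj[OF assms(1) that] g_def by auto
        thus ?thesis by (rule someI_ex)
      qed
      have len: "length \<iota> = n" using fs \<iota>_def by simp
      have \<iota>_nth: "\<iota> ! l = (if fs!l = a then None else Some (SOME t. g t = fs!l))" if "l < n" for l
        using that fs \<iota>_def by simp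
      have fsl: "fs ! l \<in> insert a (dom \<phi>)" if "l < n" for l
      proof -
        have "fs ! l \<in> set fs" using that fs by simp
        then show ?thesis using fs by auto
      qed
      have gfl: "g (SOME t. g t = fs!l) = fs!l" if "l < n" "fs!l \<noteq> a" for l
        using fsl[OF that(1)] that(2) gf by auto
      define c where "c = (\<theta>, \<iota>)"
      have "g t \<in> dom \<phi>" if st: "Some t \<in> set \<iota>" for t
      proof -
        obtain f where f: "f \<in> set fs" "f \<noteq> a" "t = (SOME t. g t = f)"
          using st unfolding \<iota>_def by (auto split: if_splits)
        then have "f \<in> dom \<phi>" using fs by auto
        then show ?thesis using gf f(3) by auto
      qed
      then have "good c" unfolding good_def c_def using \<theta> len by auto
      define k where "k = Suc (to_nat c)"
      have cin: "c \<in> set (Conds k)" unfolding setC k_def using \<open>good c\<close>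
        by (auto intro: image_eqI[of c from_nat "to_nat c"])
      have "{i. P (map (\<lambda>f. f i) fs) \<noteq> P (map (\<lambda>f. the ((\<phi>(a \<mapsto> b)) f) i) fs)} \<subseteq> {i. \<not> OK k i (b i)}"
      proof (rule subsetI, rule ccontr)
        fix i assume i: "i \<in> {i. P (map (\<lambda>f. f i) fs) \<noteq> P (map (\<lambda>f. the ((\<phi>(a \<mapsto> b)) f) i) fs)}"
          "i \<notin> {i. \<not> OK k i (b i)}"
        then have "OK k i (b i)" by auto
        then have eq: "Lsat M \<theta> \<iota> (hA a g i) = Lsat M \<theta> \<iota> (hB \<phi> g (b i) i)"
          using cin unfolding OK_def c_def by auto
        have L: "P (map (\<lambda>f. f i) fs) = Lsat M \<theta> \<iota> (hA a g i)"
        proof -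
          have "(\<lambda>l. if l < n then map (\<lambda>f. f i) fs ! l else undefined)
              = (\<lambda>l. if l < length \<iota> then hA a g i (\<iota>!l) else undefined)"
          proof
            fix l show "(if l < n then map (\<lambda>f. f i) fs ! l else undefined)
              = (if l < length \<iota> then hA a g i (\<iota>!l) else undefined)"
              using \<iota>_nth[of l] gfl[of l] fs len by (cases "l < n") (auto simp: hA_def)
          qed
          moreover have "P (map (\<lambda>f. f i) fs) = sat M (\<lambda>l. if l < n then map (\<lambda>f. f i) fs ! l else undefined) \<theta>"
            by (rule \<theta>(3)[rule_format]) (use fs in simp)
          ultimately show ?thesis by (simp only: Lsat_def)
        qed
        have R: "P (map (\<lambda>f. the ((\<phi>(a \<mapsto> b)) f) i) fs) = Lsat M \<theta> \<iota> (hB \<phi> g (b i) i)"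
        proof -
          have "(\<lambda>l. if l < n then map (\<lambda>f. the ((\<phi>(a \<mapsto> b)) f) i) fs ! l else undefined)
              = (\<lambda>l. if l < length \<iota> then hB \<phi> g (b i) i (\<iota>!l) else undefined)"
          proof
            fix l show "(if l < n then map (\<lambda>f. the ((\<phi>(a \<mapsto> b)) f) i) fs ! l else undefined)
              = (if l < length \<iota> then hB \<phi> g (b i) i (\<iota>!l) else undefined)"
              using \<iota>_nth[of l] gfl[of l] fs len by (cases "l < n") (auto simp: hB_def)
          qed
          moreover have "P (map (\<lambda>f. the ((\<phi>(a \<mapsto> b)) f) i) fs) = sat M (\<lambda>l. if l < n then map (\<lambda>f. the ((\<phi>(a \<mapsto> b)) f) i) fs ! l else undefined) \<theta>"
            by (rule \<theta>(3)[rule_format]) (use fs in simp)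
          ultimately show ?thesis by (simp only: Lsat_def)
        qed
        from i(1) L R eq show False by auto
      qed
      thus "finite {i. P (map (\<lambda>f. f i) fs) \<noteq> P (map (\<lambda>f. the ((\<phi>(a \<mapsto> b)) f) i) fs)}"
        using OKb[of k] finite_subset by blast
    qed
  qed
qed

end
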